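(* Let $k$ be a positive integer and $n\ge 4$. Then the perfect number $N_{(n,2)}$ equals $k^2-k$ if $n=2k$, and equals $k^2$ if $n=2k+1$.
   Context: Let $S=K[x_1,\ldots,x_n]$ over a field $K$, and $sm(S)_d$ the set of square-free monomials of degree $d$. For a set $A$ of square-free monomials, $\sqcup(A)=\{gx_i\mid g\in A,\ x_i\nmid g\}$ and $\sqcap(A)=\{h\ne 1\mid h=g/x_i \text{ for some } g\in A,\ x_i\mid g\}$. A set $A\subseteq sm(S)_d$ is $(n,d)^{th}$ perfect if $\sqcup(A)=sm(S)_{d+1}$ and $\sqcap(A)=sm(S)_{d-1}$. The perfect number $N_{(n,d)}$ is the least cardinality of an $(n,d)^{th}$ perfect set. *)

theory Defs
  imports Main
begin

text \<open>A square-free monomial in x_1,...,x_n is identified with its support,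
  a subset of {1..n}; its degree is the cardinality of the support.
  The monomial 1 corresponds to the empty set.\<close>

definition sm :: "nat \<Rightarrow> nat \<Rightarrow> nat set set" where
  "sm n d = {g. g \<subseteq> {1..n} \<and> card g = d}"

text \<open>Upper shadow: multiply by a variable x_i (i in {1..n}) not dividing g.\<close>
definition sqcup :: "nat \<Rightarrow> nat set set \<Rightarrow> nat set set" where
  "sqcup n A = {insert i g | g i. g \<in> A \<and> i \<in> {1..n} \<and> i \<notin> g}"

text \<open>Lower shadow: divide by a variable x_i dividing g, excluding the monomial 1.\<close>
definition sqcap :: "nat set set \<Rightarrow> nat set set" where
  "sqcap A = {g - {i} | g i. g \<in> A \<and> i \<in> g \<and> g - {i} \<noteq> {}}"

definition perfect :: "nat \<Rightarrow> nat \<Rightarrow> nat set set \<Rightarrow> bool" where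
  "perfect n d A \<longleftrightarrow> A \<subseteq> sm n d \<and> sqcup n A = sm n (d + 1) \<and> sqcap A = sm n (d - 1)"

definition perfect_number :: "nat \<Rightarrow> nat \<Rightarrow> nat" where
  "perfect_number n d = (LEAST m. \<exists>A. perfect n d A \<and> card A = m)"

end

theory Submission imports Defs begin

lemma two_choose: "2 * (n choose 2) + n = n * (n::nat)"
  by (cases n) (auto simp: choose_two)

lemma lower:
  "finite V \<Longrightarrow> A \<subseteq> {e. e \<subseteq> V \<and> card e = 2} \<Longrightarrow>
   (\<forall>T. T \<subseteq> V \<longrightarrow> card T = 3 \<longrightarrow> (\<exists>e\<in>A. e \<subseteq> T)) \<Longrightarrow>
   card V ^ 2 \<le> 4 * card A + 2 * card V"
proof (induction "card V" arbitrary: V A rule: less_induct)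
  case less
  have finA: "finite A"
  proof -
    have "A \<subseteq> Pow V" using less.prems(2) by auto
    then show ?thesis using less.prems(1) finite_subset by blast
  qed
  show ?case
  proof (cases "\<forall>u\<in>V. \<forall>v\<in>V. u \<noteq> v \<longrightarrow> {u,v} \<in> A")
    case True
    have "{e. e \<subseteq> V \<and> card e = 2} \<subseteq> A"
    proof
      fix e assume "e \<in> {e. e \<subseteq> V \<and> card e = 2}"
      then obtain x y where "e = {x,y}" "x \<noteq> y" "e \<subseteq> V" by (auto simp: card_2_iff)
      then show "e \<in> A" using True by auto
    qed
    hence "card V choose 2 \<le> card A"
      using card_mono[OF finA] n_subsets[OF less.prems(1), of 2] by metis
    moreover have "2 * (card V choose 2) + card V = card V * card V" by (rule two_choose)
    ultimately show ?thesis by (simp add: power2_eq_square)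
  next
    case False
    then obtain u v where uv: "u \<in> V" "v \<in> V" "u \<noteq> v" "{u,v} \<notin> A" by blast
    define V' where "V' = V - {u,v}"
    define A' where "A' = {e\<in>A. e \<subseteq> V'}"
    have "card {u,v} \<le> card V" using uv less.prems(1) by (intro card_mono) auto
    then have cV: "card V = card V' + 2"
      using uv less.prems(1) unfolding V'_def
      by (simp add: card_Diff_subset)
    have finV': "finite V'" using less.prems(1) V'_def by simp
    have IH: "card V' ^ 2 \<le> 4 * card A' + 2 * card V'"
    proof (rule less.hyps)
      show "card V' < card V" using cV by simp
      show "finite V'" by (rule finV')
      show "A' \<subseteq> {e. e \<subseteq> V' \<and> card e = 2}" using less.prems(2) A'_def by auto
      show "\<forall>T. T \<subseteq> V' \<longrightarrow> card T = 3 \<longrightarrow> (\<exists>e\<in>A'. e \<subseteq> T)"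
      proof (intro allI impI)
        fix T assume T: "T \<subseteq> V'" "card T = 3"
        then have "T \<subseteq> V" using V'_def by auto
        then obtain e where "e \<in> A" "e \<subseteq> T" using less.prems(3) T by blast
        then show "\<exists>e\<in>A'. e \<subseteq> T" using T A'_def by auto
      qed
    qed
    have ex: "\<forall>w\<in>V'. \<exists>e. e \<in> A \<and> w \<in> e \<and> e \<subseteq> {u,v,w}"
    proof
      fix w assume w: "w \<in> V'"
      have "{u,v,w} \<subseteq> V" "card {u,v,w} = 3" using w uv V'_def by auto
      then obtain e where e: "e \<in> A" "e \<subseteq> {u,v,w}" using less.prems(3) by blast
      have ce: "card e = 2" using e less.prems(2) by auto
      have "w \<in> e"
      proof (rule ccontr)
        assume "w \<notin> e"
        then have "e \<subseteq> {u,v}" using e by auto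
        moreover have "card {u,v} = 2" using uv by simp
        ultimately have "e = {u,v}" using ce by (metis card_subset_eq finite.emptyI finite.insertI)
        then show False using e uv by simp
      qed
      then show "\<exists>e. e \<in> A \<and> w \<in> e \<and> e \<subseteq> {u,v,w}" using e by blast
    qed
    from bchoice[OF ex] obtain g where g: "\<forall>w\<in>V'. g w \<in> A \<and> w \<in> g w \<and> g w \<subseteq> {u,v,w}"
      by blast
    have inj: "inj_on g V'"
    proof (rule inj_onI)
      fix w1 w2 assume "w1 \<in> V'" "w2 \<in> V'" "g w1 = g w2"
      then have "w1 \<in> {u,v,w2}" "w1 \<notin> {u,v}" using g V'_def by auto
      then show "w1 = w2" by auto
    qed
    have img: "g ` V' \<subseteq> A - A'"
    proof
      fix x assume "x \<in> g ` V'"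
      then obtain w where w: "w \<in> V'" "x = g w" by blast
      have "x \<in> A" using g w by auto
      moreover have "\<not> x \<subseteq> V'"
      proof
        assume "x \<subseteq> V'"
        then have "x \<subseteq> {w}" using g w V'_def by auto
        then have "card x \<le> card {w}" by (intro card_mono) auto
        then have "card x \<le> 1" by simp
        moreover have "card x = 2" using \<open>x \<in> A\<close> less.prems(2) by auto
        ultimately show False by simp
      qed
      ultimately show "x \<in> A - A'" using A'_def by auto
    qed
    have "card V' \<le> card (A - A')"
      using card_mono[OF _ img] finA card_image[OF inj] by simp
    moreover have "card A = card A' + card (A - A')"
    proof -
      have "A' \<subseteq> A" using A'_def by auto
      then have "card (A - A') = card A - card A'" "card A' \<le> card A"
        using finA finite_subset card_Diff_subset card_mono by metis+
      then show ?thesis by simp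
    qed
    ultimately have "card A' + card V' \<le> card A" by simp
    moreover have "(card V' + 2)^2 = card V' ^ 2 + 4 * card V' + 4" by (simp add: power2_eq_square algebra_simps)
    ultimately show ?thesis using IH cV by simp
  qed
qed

definition P2 :: "nat set \<Rightarrow> nat set set" where
  "P2 S = {e. e \<subseteq> S \<and> card e = 2}"

lemma perfect_dir:
  assumes "perfect n 2 A"
  shows "A \<subseteq> {e. e \<subseteq> {1..n} \<and> card e = 2}"
    and "\<forall>T. T \<subseteq> {1..n} \<longrightarrow> card T = 3 \<longrightarrow> (\<exists>e\<in>A. e \<subseteq> T)"
proof -
  show "A \<subseteq> {e. e \<subseteq> {1..n} \<and> card e = 2}" using assms by (auto simp: perfect_def sm_def)
  show "\<forall>T. T \<subseteq> {1..n} \<longrightarrow> card T = 3 \<longrightarrow> (\<exists>e\<in>A. e \<subseteq> T)"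
  proof (intro allI impI)
    fix T :: "nat set" assume "T \<subseteq> {1..n}" "card T = 3"
    then have "T \<in> sqcup n A" using assms by (simp add: perfect_def sm_def)
    then show "\<exists>e\<in>A. e \<subseteq> T" unfolding sqcup_def by blast
  qed
qed

lemma construct:
  assumes dis: "V1 \<inter> V2 = {}" and un: "V1 \<union> V2 = {1..n}"
    and c1: "card V1 \<ge> 2" and c2: "card V2 \<ge> 2"
  shows "perfect n 2 (P2 V1 \<union> P2 V2)"
    and "card (P2 V1 \<union> P2 V2) = (card V1 choose 2) + (card V2 choose 2)"
proof -
  have f1: "finite V1" by (rule finite_subset[of _ "{1..n}"]) (use un in auto)
  have f2: "finite V2" by (rule finite_subset[of _ "{1..n}"]) (use un in auto)
  define A where "A = P2 V1 \<union> P2 V2"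
  have sub: "A \<subseteq> sm n 2" unfolding A_def P2_def sm_def using un by auto
  have cup: "sqcup n A = sm n 3"
  proof
    show "sqcup n A \<subseteq> sm n 3"
    proof
      fix x assume "x \<in> sqcup n A"
      then obtain g i where gi: "x = insert i g" "g \<in> A" "i \<in> {1..n}" "i \<notin> g"
        unfolding sqcup_def by blast
      have "g \<in> sm n 2" using gi sub by blast
      then have g: "g \<subseteq> {1..n}" "card g = 2" by (simp_all add: sm_def)
      then have "finite g" by (intro card_ge_0_finite) simp
      then have "card x = 3" using gi g by simp
      moreover have "x \<subseteq> {1..n}" using gi g by simp
      ultimately show "x \<in> sm n 3" by (simp add: sm_def)
    qed
  next
    show "sm n 3 \<subseteq> sqcup n A"
    proof
      fix T assume "T \<in> sm n 3"
      then have T: "T \<subseteq> {1..n}" "card T = 3" by (auto simp: sm_def)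
      have fT: "finite T" using T by (intro card_ge_0_finite) simp
      have TU: "(T \<inter> V1) \<union> (T \<inter> V2) = T" using T un by auto
      have "card ((T \<inter> V1) \<union> (T \<inter> V2)) = card (T \<inter> V1) + card (T \<inter> V2)"
        by (rule card_Un_disjoint) (use fT dis in auto)
      then have "card T = card (T \<inter> V1) + card (T \<inter> V2)" unfolding TU .
      then have "card (T \<inter> V1) \<ge> 2 \<or> card (T \<inter> V2) \<ge> 2" using T by linarith
      then obtain S where S: "S = V1 \<or> S = V2" "card (T \<inter> S) \<ge> 2" by blast
      then obtain e where e: "e \<subseteq> T \<inter> S" "card e = 2"
        using obtain_subset_with_card_n[OF S(2)] by blast
      have "e \<in> P2 S" using e unfolding P2_def by simp
      moreover have "P2 S \<subseteq> A" using S(1) unfolding A_def by blast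
      ultimately have eA: "e \<in> A" by blast
      have fe: "finite e" using e by (intro card_ge_0_finite) simp
      have "e \<subseteq> T" using e by blast
      then have "card (T - e) = card T - card e" using fe by (rule card_Diff_subset[rotated])
      then have "card (T - e) = 1" using e T by simp
      then obtain i where i: "T - e = {i}" using card_1_singletonE by blast
      then have "i \<in> T" "i \<notin> e" by blast+
      then have "T = insert i e" "i \<notin> e" "i \<in> {1..n}" using e(1) i T(1) by blast+
      then show "T \<in> sqcup n A" unfolding sqcup_def using eA by blast
    qed
  qed
  have cap: "sqcap A = sm n 1"
  proof
    show "sqcap A \<subseteq> sm n 1"
    proof
      fix x assume "x \<in> sqcap A"
      then obtain g i where gi: "x = g - {i}" "g \<in> A" "i \<in> g"
        unfolding sqcap_def by blast
      have g: "g \<subseteq> {1..n}" "card g = 2" using gi sub sm_def by auto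
      then have "finite g" by (intro card_ge_0_finite) simp
      then have "card x = 1" using g gi by simp
      moreover have "x \<subseteq> {1..n}" using g gi by auto
      ultimately show "x \<in> sm n 1" by (simp add: sm_def)
    qed
  next
    show "sm n 1 \<subseteq> sqcap A"
    proof
      fix x assume "x \<in> sm n 1"
      then have x: "x \<subseteq> {1..n}" "card x = 1" by (simp_all add: sm_def)
      then obtain i where i0: "x = {i}" using card_1_singletonE by blast
      then have i: "x = {i}" "i \<in> {1..n}" using x by auto
      have "i \<in> V1 \<union> V2" using i un by simp
      then obtain S where S: "S = V1 \<or> S = V2" "i \<in> S" by blast
      have fS: "finite S" using S(1) f1 f2 by blast
      have "card S \<ge> 2" using S(1) c1 c2 by blast
      have "S - {i} \<noteq> {}"
      proof
        assume "S - {i} = {}"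
        then have "S \<subseteq> {i}" by auto
        then have "card S \<le> card {i}" using fS by (intro card_mono) auto
        then show False using \<open>card S \<ge> 2\<close> by simp
      qed
      then obtain j where j: "j \<in> S" "j \<noteq> i" by auto
      have "card {i,j} = 2" using j by simp
      moreover have "{i,j} \<subseteq> S" using S(2) j(1) by simp
      ultimately have "{i,j} \<in> P2 S" unfolding P2_def by simp
      moreover have "P2 S \<subseteq> A" using S(1) unfolding A_def by blast
      ultimately have ij: "{i,j} \<in> A" by blast
      have x2: "x = {i,j} - {j}" "j \<in> {i,j}" "{i,j} - {j} \<noteq> {}" using i j by auto
      show "x \<in> sqcap A" unfolding sqcap_def using ij x2 by blast
    qed
  qed
  show "perfect n 2 (P2 V1 \<union> P2 V2)"
    using sub cup cap unfolding perfect_def A_def[symmetric] by simp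
  have "P2 V1 \<inter> P2 V2 = {}"
  proof (rule ccontr)
    assume "P2 V1 \<inter> P2 V2 \<noteq> {}"
    then obtain e where "e \<subseteq> V1" "e \<subseteq> V2" "card e = 2" unfolding P2_def by auto
    then have "e = {}" using dis by auto
    then show False using \<open>card e = 2\<close> by simp
  qed
  moreover have "finite (P2 V1)" "finite (P2 V2)"
    unfolding P2_def using f1 f2 by auto
  ultimately show "card (P2 V1 \<union> P2 V2) = (card V1 choose 2) + (card V2 choose 2)"
  proof -
    have "card (P2 V1 \<union> P2 V2) = card (P2 V1) + card (P2 V2)"
      using card_Un_disjoint \<open>finite (P2 V1)\<close> \<open>finite (P2 V2)\<close> \<open>P2 V1 \<inter> P2 V2 = {}\<close> by blast
    then show ?thesis using n_subsets[OF f1, of 2] n_subsets[OF f2, of 2] unfolding P2_def by simp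
  qed
qed

lemma pn_eq:
  assumes "perfect n d A0" "card A0 = m" "\<And>A. perfect n d A \<Longrightarrow> m \<le> card A"
  shows "perfect_number n d = m"
  unfolding perfect_number_def
proof (rule Least_equality)
  show "\<exists>A. perfect n d A \<and> card A = m" using assms by blast
  show "\<And>y. \<exists>A. perfect n d A \<and> card A = y \<Longrightarrow> m \<le> y" using assms by blast
qed

lemma lowerP:
  assumes "perfect n 2 A"
  shows "n ^ 2 \<le> 4 * card A + 2 * n"
  using lower[OF _ perfect_dir(1)[OF assms] perfect_dir(2)[OF assms]] by simp

theorem theorem3p1:
  fixes k n :: nat
  assumes "k > 0" and "n \<ge> 4"
  shows "(n = 2 * k \<longrightarrow> perfect_number n 2 = k ^ 2 - k)
       \<and> (n = 2 * k + 1 \<longrightarrow> perfect_number n 2 = k ^ 2)"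
proof (intro conjI impI)
  assume n: "n = 2 * k"
  then have k2: "k \<ge> 2" using assms by simp
  have u: "{1..k} \<union> {k+1..2*k} = {1..n}" using n by auto
  have d: "{1..k} \<inter> {k+1..2*k} = {}" by auto
  have c1: "card {1..k} \<ge> 2" "card {k+1..2*k} \<ge> 2" using k2 by simp_all
  have ck: "card {1..k} = k" "card {k+1..2*k} = k" by simp_all
  have c: "perfect n 2 (P2 {1..k} \<union> P2 {k+1..2*k})"
          "card (P2 {1..k} \<union> P2 {k+1..2*k}) = (k choose 2) + (k choose 2)"
    using construct[OF d u c1] ck by simp_all
  have tc: "2 * (k choose 2) + k = k * k" by (rule two_choose)
  show "perfect_number n 2 = k ^ 2 - k"
  proof (rule pn_eq[OF c(1)])
    show "card (P2 {1..k} \<union> P2 {k+1..2*k}) = k ^ 2 - k" using c(2) tc by (simp add: power2_eq_square)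
    fix A assume "perfect n 2 A"
    from lowerP[OF this] have "(2*k)^2 \<le> 4 * card A + 2 * (2*k)" using n by simp
    moreover have "(2*k)^2 = 4 * (k*k)" by (simp add: power2_eq_square)
    ultimately show "k ^ 2 - k \<le> card A" by (simp add: power2_eq_square)
  qed
next
  assume n: "n = 2 * k + 1"
  then have k2: "k \<ge> 2" using assms by simp
  have u: "{1..k} \<union> {k+1..2*k+1} = {1..n}" using n by auto
  have d: "{1..k} \<inter> {k+1..2*k+1} = {}" by auto
  have c1: "card {1..k} \<ge> 2" "card {k+1..2*k+1} \<ge> 2" using k2 by simp_all
  have ck: "card {1..k} = k" "card {k+1..2*k+1} = k+1" by simp_all
  have c: "perfect n 2 (P2 {1..k} \<union> P2 {k+1..2*k+1})"
          "card (P2 {1..k} \<union> P2 {k+1..2*k+1}) = (k choose 2) + ((k+1) choose 2)"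
    using construct[OF d u c1] ck by simp_all
  have tc: "2 * (k choose 2) + k = k * k" "2 * ((k+1) choose 2) + (k+1) = (k+1) * (k+1)"
    by (rule two_choose)+
  show "perfect_number n 2 = k ^ 2"
  proof (rule pn_eq[OF c(1)])
    show "card (P2 {1..k} \<union> P2 {k+1..2*k+1}) = k ^ 2" using c(2) tc
      by (simp add: power2_eq_square algebra_simps)
    fix A assume "perfect n 2 A"
    from lowerP[OF this] have "(2*k+1)^2 \<le> 4 * card A + 2 * (2*k+1)" using n by simp
    moreover have "(2*k+1)^2 = 4 * (k*k) + 4 * k + 1" by (simp add: power2_eq_square algebra_simps)
    ultimately have "4 * (k*k) \<le> 4 * card A + 1" by simp
    then show "k ^ 2 \<le> card A" by (simp add: power2_eq_square)
  qed
qed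

end
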